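(* Let $K,n\in\mathbb{N}^*$ and $\mu\in H^3((0,1),\mathbb{R})$ satisfy (H2)$_{K,n}$. Then there exist at least $n$ indices $j\in\mathbb{N}^*$ with $c_j\neq0$.
   Context: $\varphi_j=\sqrt2\sin(j\pi x)$, $\lambda_j=(j\pi)^2$, $c_j=\langle\mu\varphi_1,\varphi_j\rangle\langle\mu\varphi_K,\varphi_j\rangle$ with $\langle f,g\rangle=\int_0^1f\bar g$. (H2)$_{K,n}$: $\sum_jj^{4n}|c_j|<\infty$ and, with $A^p_K=(-1)^{p-1}\sum_{j}(\lambda_j-\frac{\lambda_1+\lambda_K}2)(\lambda_K-\lambda_j)^{p-1}(\lambda_j-\lambda_1)^{p-1}c_j$, one has $A^p_K=0$ for $1\le p\le n-1$ and $A^n_K\ne0$. *)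

theory Defs
  imports "HOL-Analysis.Analysis"
begin

text \<open>Eigenfunctions and eigenvalues of the Dirichlet Laplacian on (0,1).\<close>
definition phi :: "nat \<Rightarrow> real \<Rightarrow> real" where
  "phi j x = sqrt 2 * sin (real j * pi * x)"

definition lam :: "nat \<Rightarrow> real" where
  "lam j = (real j * pi)\<^sup>2"

definition l2inner :: "(real \<Rightarrow> real) \<Rightarrow> (real \<Rightarrow> real) \<Rightarrow> real" where
  "l2inner f g = (LINT x:{0<..<1}|lborel. f x * g x)"

definition cc :: "(real \<Rightarrow> real) \<Rightarrow> nat \<Rightarrow> nat \<Rightarrow> real" where
  "cc \<mu> K j = l2inner (\<lambda>x. \<mu> x * phi 1 x) (phi j) * l2inner (\<lambda>x. \<mu> x * phi K x) (phi j)"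

definition Acoef :: "(real \<Rightarrow> real) \<Rightarrow> nat \<Rightarrow> nat \<Rightarrow> real" where
  "Acoef \<mu> K p = (-1) ^ (p - 1) *
     (\<Sum>i. let j = Suc i in
        (lam j - (lam 1 + lam K) / 2) * (lam K - lam j) ^ (p - 1) * (lam j - lam 1) ^ (p - 1) * cc \<mu> K j)"

definition H2 :: "(real \<Rightarrow> real) \<Rightarrow> nat \<Rightarrow> nat \<Rightarrow> bool" where
  "H2 \<mu> K n \<longleftrightarrow>
     summable (\<lambda>i. real (Suc i) ^ (4 * n) * \<bar>cc \<mu> K (Suc i)\<bar>) \<and>
     (\<forall>p. 1 \<le> p \<and> p \<le> n - 1 \<longrightarrow> Acoef \<mu> K p = 0) \<and>
     Acoef \<mu> K n \<noteq> 0"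

definition test_fun :: "(real \<Rightarrow> real) \<Rightarrow> bool" where
  "test_fun \<phi> \<longleftrightarrow>
     (\<forall>k. (\<lambda>x. ((deriv ^^ k) \<phi>) x) differentiable_on UNIV) \<and>
     (\<exists>a b. 0 < a \<and> a \<le> b \<and> b < 1 \<and> (\<forall>x. x \<notin> {a..b} \<longrightarrow> \<phi> x = 0))"

definition L2_01 :: "(real \<Rightarrow> real) \<Rightarrow> bool" where
  "L2_01 f \<longleftrightarrow> set_borel_measurable lborel {0<..<1} f \<and>
     set_integrable lborel {0<..<1} (\<lambda>x. (f x)\<^sup>2)"

definition H3_01 :: "(real \<Rightarrow> real) \<Rightarrow> bool" where
  "H3_01 f \<longleftrightarrow> (\<exists>g :: nat \<Rightarrow> real \<Rightarrow> real. g 0 = f \<and> (\<forall>k\<le>3. L2_01 (g k)) \<and>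
     (\<forall>k\<le>3. \<forall>\<phi>. test_fun \<phi> \<longrightarrow>
        (LINT x:{0<..<1}|lborel. f x * (deriv ^^ k) \<phi> x)
          = (-1) ^ k * (LINT x:{0<..<1}|lborel. g k x * \<phi> x)))"

end

theory Submission
  imports Defs "HOL-Computational_Algebra.Polynomial"
begin

lemma Acoef_finite:
  fixes \<mu> :: "real \<Rightarrow> real" and K :: nat
  defines "I \<equiv> {i. cc \<mu> K (Suc i) \<noteq> 0}"
  assumes fin: "finite I" and p: "p \<ge> 1"
  shows "Acoef \<mu> K p = (\<Sum>i\<in>I. ((lam (Suc i) - (lam 1 + lam K) / 2) * cc \<mu> K (Suc i)) *
            ((lam (Suc i) - lam K) * (lam (Suc i) - lam 1)) ^ (p - 1))"
proof -
  let ?f = "\<lambda>i. let j = Suc i in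
        (lam j - (lam 1 + lam K) / 2) * (lam K - lam j) ^ (p - 1) * (lam j - lam 1) ^ (p - 1) * cc \<mu> K j"
  have "suminf ?f = sum ?f I"
    by (rule suminf_finite[OF fin]) (auto simp: I_def Let_def)
  hence "Acoef \<mu> K p = (-1)^(p-1) * sum ?f I" by (simp add: Acoef_def)
  also have "\<dots> = (\<Sum>i\<in>I. (-1)^(p-1) * ?f i)" by (simp add: sum_distrib_left)
  also have "\<dots> = (\<Sum>i\<in>I. ((lam (Suc i) - (lam 1 + lam K) / 2) * cc \<mu> K (Suc i)) *
            ((lam (Suc i) - lam K) * (lam (Suc i) - lam 1)) ^ (p - 1))"
  proof (rule sum.cong, simp)
    fix i
    define a where "a = lam K - lam (Suc i)"
    define b where "b = lam (Suc i) - lam 1"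
    define W where "W = (lam (Suc i) - (lam 1 + lam K) / 2) * cc \<mu> K (Suc i)"
    have e: "(-1::real)^(p-1) * (a ^ (p - 1) * b^(p-1)) = ((lam (Suc i) - lam K) * b)^(p-1)"
      unfolding a_def by (metis minus_diff_eq mult_minus1 power_mult_distrib mult.assoc)
    have f: "?f i = W * (a ^ (p - 1) * b^(p-1))"
      unfolding W_def a_def b_def Let_def by (simp only: mult.commute mult.left_commute mult.assoc)
    show "(-1)^(p-1) * ?f i = ((lam (Suc i) - (lam 1 + lam K) / 2) * cc \<mu> K (Suc i)) *
            ((lam (Suc i) - lam K) * (lam (Suc i) - lam 1)) ^ (p - 1)"
      unfolding f W_def[symmetric] b_def[symmetric] e[symmetric] by (simp only: mult.commute mult.left_commute mult.assoc)
  qed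
  finally show ?thesis .
qed

lemma key:
  fixes w y :: "nat \<Rightarrow> real" and A :: "nat \<Rightarrow> real"
  assumes fin: "finite I" and cardI: "card I < n"
    and A: "\<And>p. p \<ge> 1 \<Longrightarrow> A p = (\<Sum>i\<in>I. w i * y i ^ (p - 1))"
    and z: "\<And>p. 1 \<le> p \<Longrightarrow> p \<le> n - 1 \<Longrightarrow> A p = 0"
  shows "A n = 0"
proof -
  define d where "d = card I"
  define Q where "Q = monom (1::real) (n-1-d) * (\<Prod>i\<in>I. [:-y i, 1:])"
  have degP: "degree (\<Prod>i\<in>I. [:-y i, 1:]) = d"
    by (subst degree_prod_sum_eq) (auto simp: d_def)
  have lcP: "lead_coeff (\<Prod>i\<in>I. [:-y i, 1:]) = 1"
    by (simp add: lead_coeff_prod)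
  have P0: "(\<Prod>i\<in>I. [:-y i, 1:]) \<noteq> 0" using lcP by auto
  have degQ: "degree Q = n - 1"
    unfolding Q_def using degP P0 cardI d_def
    by (subst degree_mult_eq) (auto simp: degree_monom_eq)
  have lcQ: "coeff Q (n-1) = 1"
    using degQ lcP by (metis Q_def lead_coeff_mult lead_coeff_monom mult_1)
  have root: "poly Q (y i) = 0" if "i \<in> I" for i
    unfolding Q_def using that fin by (auto simp: poly_prod)
  have "0 = (\<Sum>i\<in>I. w i * poly Q (y i))" using root by simp
  also have "\<dots> = (\<Sum>i\<in>I. w i * (\<Sum>k\<le>n-1. coeff Q k * y i ^ k))"
    by (simp add: poly_altdef degQ)
  also have "\<dots> = (\<Sum>k\<le>n-1. coeff Q k * (\<Sum>i\<in>I. w i * y i ^ k))"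
    unfolding sum_distrib_left by (subst sum.swap) (simp add: mult.left_commute)
  also have "\<dots> = (\<Sum>k\<le>n-1. coeff Q k * A (Suc k))" by (simp add: A)
  also have "\<dots> = (\<Sum>k\<in>{n-1}. coeff Q k * A (Suc k))"
  proof (rule sum.mono_neutral_right)
    show "\<forall>k\<in>{..n-1} - {n-1}. coeff Q k * A (Suc k) = 0"
    proof
      fix k assume "k \<in> {..n-1} - {n-1}"
      hence "A (Suc k) = 0" using z[of "Suc k"] by auto
      thus "coeff Q k * A (Suc k) = 0" by simp
    qed
  qed auto
  also have "\<dots> = A n" using lcQ cardI by simp
  finally show ?thesis by simp
qed

theorem lemma5p3:
  fixes \<mu> :: "real \<Rightarrow> real" and K n :: nat
  assumes "K \<ge> 1" and "n \<ge> 1"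
    and "H3_01 \<mu>"
    and "H2 \<mu> K n"
  shows "\<exists>S. finite S \<and> card S = n \<and> S \<subseteq> {j. j \<ge> 1 \<and> cc \<mu> K j \<noteq> 0}"
proof -
  define I where "I = {i. cc \<mu> K (Suc i) \<noteq> 0}"
  have N: "{j. j \<ge> 1 \<and> cc \<mu> K j \<noteq> 0} = Suc ` I"
  proof (rule set_eqI, rule iffI)
    fix j assume "j \<in> {j. j \<ge> 1 \<and> cc \<mu> K j \<noteq> 0}"
    hence "j = Suc (j - 1)" "j - 1 \<in> I" by (auto simp: I_def)
    thus "j \<in> Suc ` I" by (metis imageI)
  qed (auto simp: I_def)
  have H: "summable (\<lambda>i. real (Suc i) ^ (4 * n) * \<bar>cc \<mu> K (Suc i)\<bar>)"
     "\<And>p. 1 \<le> p \<Longrightarrow> p \<le> n - 1 \<Longrightarrow> Acoef \<mu> K p = 0" "Acoef \<mu> K n \<noteq> 0"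
    using assms(4) unfolding H2_def by blast+
  have big: "\<not> (finite I \<and> card I < n)"
  proof
    assume h: "finite I \<and> card I < n"
    have "Acoef \<mu> K n = 0"
    proof (rule key[where I=I and w="\<lambda>i. (lam (Suc i) - (lam 1 + lam K) / 2) * cc \<mu> K (Suc i)"
            and y="\<lambda>i. (lam (Suc i) - lam K) * (lam (Suc i) - lam 1)"])
      show "finite I" "card I < n" using h by auto
      show "\<And>p. 1 \<le> p \<Longrightarrow> p \<le> n - 1 \<Longrightarrow> Acoef \<mu> K p = 0" by (rule H(2))
      fix p :: nat assume "p \<ge> 1"
      thus "Acoef \<mu> K p = (\<Sum>i\<in>I. ((lam (Suc i) - (lam 1 + lam K) / 2) * cc \<mu> K (Suc i)) *
            ((lam (Suc i) - lam K) * (lam (Suc i) - lam 1)) ^ (p - 1))"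
        using Acoef_finite[of \<mu> K p] h unfolding I_def by blast
    qed
    thus False using H(3) by blast
  qed
  have "\<exists>S. finite S \<and> card S = n \<and> S \<subseteq> Suc ` I"
  proof (cases "finite (Suc ` I)")
    case True
    hence "finite I" by (simp add: finite_image_iff)
    hence "card (Suc ` I) \<ge> n" using big by (simp add: card_image)
    thus ?thesis by (meson obtain_subset_with_card_n)
  next
    case False
    thus ?thesis using infinite_arbitrarily_large by blast
  qed
  thus ?thesis using N by simp
qed

end
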